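(* Let $g,h,K$ be complex numbers with $K\neq\tfrac12$, and set $K'=K(2K-1)^{-1}$. For any complex $L$ let $$\hat R(L;g,h)=\begin{pmatrix}1&-hL&hL&ghL\\0&1-L&L&gL\\0&L&1-L&-gL\\0&0&0&1\end{pmatrix},\qquad R(L;g,h)=P\hat R(L;g,h).$$ Then $R(K';g,h)$ is invertible and $$P\,R(K;g,h)\,P=\big(R(K';g,h)\big)^{-1}.$$
   Context: Matrices are written in the ordered basis $e_1\otimes e_1,e_1\otimes e_2,e_2\otimes e_1,e_2\otimes e_2$ of $\mathbb{C}^2\otimes\mathbb{C}^2$; $P$ is the flip matrix, i.e. the $4\times4$ permutation matrix swapping the second and third basis vectors. The matrix $PRP$ is what the paper denotes $(21)R$. *)

theory Defs
  imports "HOL-Analysis.Analysis"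
begin

text \<open>4x4 complex matrices in the ordered basis e1e1, e1e2, e2e1, e2e2
  (rows/columns indexed 1,2,3,4 of type 4).\<close>

definition flipP :: "complex^4^4" where
  "flipP = vector [vector [1,0,0,0], vector [0,0,1,0], vector [0,1,0,0], vector [0,0,0,1]]"

definition Rhat :: "complex \<Rightarrow> complex \<Rightarrow> complex \<Rightarrow> complex^4^4" where
  "Rhat L g h = vector [vector [1, -h*L, h*L, g*h*L],
                        vector [0, 1 - L, L, g*L],
                        vector [0, L, 1 - L, -g*L],
                        vector [0, 0, 0, 1]]"

definition Rmat :: "complex \<Rightarrow> complex \<Rightarrow> complex \<Rightarrow> complex^4^4" where
  "Rmat L g h = flipP ** Rhat L g h"

end

theory Submission
  imports Defs
begin

lemma v4: "(vector [a,b,c,d] :: 'a::zero^4) $ 1 = a" "(vector [a,b,c,d] :: 'a::zero^4) $ 2 = b"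
  "(vector [a,b,c,d] :: 'a::zero^4) $ 3 = c" "(vector [a,b,c,d] :: 'a::zero^4) $ 4 = d"
  by (simp_all add: vector_def)

lemma prodL:
  fixes g h K L :: complex
  assumes e: "2*K*L = K + L"
  shows "Rmat L g h ** (flipP ** Rmat K g h ** flipP) = mat 1"
  unfolding Rmat_def flipP_def Rhat_def
  apply (simp add: vec_eq_iff forall_4 matrix_matrix_mult_def sum_4 v4 mat_def)
  using e by algebra

theorem mainTheorem10:
  fixes g h K :: complex
  assumes "K \<noteq> 1/2"
  defines "K' \<equiv> K / (2*K - 1)"
  shows "invertible (Rmat K' g h) \<and> flipP ** Rmat K g h ** flipP = matrix_inv (Rmat K' g h)"
proof -
  let ?A = "Rmat K' g h" and ?B = "flipP ** Rmat K g h ** flipP"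
  have d: "2*K - 1 \<noteq> 0" using assms(1) by (auto simp: field_simps)
  have e: "2*K*K' = K + K'"
  proof -
    have "K' * (2*K - 1) = K" unfolding K'_def using d by simp
    thus ?thesis by (simp add: algebra_simps)
  qed
  have AB: "?A ** ?B = mat 1" using prodL[OF e] .
  hence BA: "?B ** ?A = mat 1" using matrix_left_right_inverse by blast
  have inv: "invertible ?A" unfolding invertible_def using AB BA by blast
  have "?A ** matrix_inv ?A = mat 1 \<and> matrix_inv ?A ** ?A = mat 1"
    using inv unfolding invertible_def matrix_inv_def by (rule someI_ex)
  hence IL: "matrix_inv ?A ** ?A = mat 1" by blast
  have "matrix_inv ?A = matrix_inv ?A ** (?A ** ?B)" using AB by simp
  also have "\<dots> = (matrix_inv ?A ** ?A) ** ?B" by (simp add: matrix_mul_assoc)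
  also have "\<dots> = ?B" using IL by simp
  finally show ?thesis using inv by simp
qed

end
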